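(* Let $R$ be a commutative u-ring and let $n\ge 1$ be an integer. Then every $n$-absorbing ideal of $R$ is strongly $n$-absorbing.
   Context: All rings are commutative with identity $1\neq 0$. An ideal $I$ of $R$ is $n$-absorbing if whenever $x_1,\dots,x_{n+1}\in R$ and $x_1x_2\cdots x_{n+1}\in I$, the product of some $n$ of the $x_i$'s lies in $I$. An ideal $I$ of $R$ is strongly $n$-absorbing if whenever $I_1,\dots,I_{n+1}$ are ideals of $R$ with $I_1I_2\cdots I_{n+1}\subseteq I$, the product of some $n$ of the $I_j$'s is contained in $I$. An ideal $I$ of $R$ is a u-ideal if whenever $I\subseteq I_1\cup\cdots\cup I_m$ for finitely many ideals $I_1,\dots,I_m$ of $R$, then $I\subseteq I_j$ for some $j$. A ring $R$ is a u-ring if every ideal of $R$ is a u-ideal. *)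

theory Defs
  imports "HOL-Algebra.Ideal_Product" "HOL-Algebra.FiniteProduct"
begin

fun ideal_list_prod :: "('a, 'b) ring_scheme \<Rightarrow> 'a set list \<Rightarrow> 'a set" where
  "ideal_list_prod R [] = carrier R"
| "ideal_list_prod R (I # Is) = ideal_prod R I (ideal_list_prod R Is)"

definition ideal_setprod :: "('a, 'b) ring_scheme \<Rightarrow> (nat \<Rightarrow> 'a set) \<Rightarrow> nat set \<Rightarrow> 'a set" where
  "ideal_setprod R I A = ideal_list_prod R (map I (sorted_list_of_set A))"

definition n_absorbing :: "('a, 'b) ring_scheme \<Rightarrow> nat \<Rightarrow> 'a set \<Rightarrow> bool" where
  "n_absorbing R n I \<longleftrightarrow> ideal I R \<and>
     (\<forall>x. (\<forall>i\<le>n. x i \<in> carrier R) \<longrightarrow> finprod R x {0..n} \<in> I \<longrightarrow>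
        (\<exists>j\<le>n. finprod R x ({0..n} - {j}) \<in> I))"

definition strongly_n_absorbing :: "('a, 'b) ring_scheme \<Rightarrow> nat \<Rightarrow> 'a set \<Rightarrow> bool" where
  "strongly_n_absorbing R n I \<longleftrightarrow> ideal I R \<and>
     (\<forall>J. (\<forall>i\<le>n. ideal (J i) R) \<longrightarrow> ideal_setprod R J {0..n} \<subseteq> I \<longrightarrow>
        (\<exists>j\<le>n. ideal_setprod R J ({0..n} - {j}) \<subseteq> I))"

definition u_ideal :: "('a, 'b) ring_scheme \<Rightarrow> 'a set \<Rightarrow> bool" where
  "u_ideal R I \<longleftrightarrow> ideal I R \<and>
     (\<forall>S. finite S \<longrightarrow> (\<forall>J\<in>S. ideal J R) \<longrightarrow> I \<subseteq> \<Union>S \<longrightarrow> (\<exists>J\<in>S. I \<subseteq> J))"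

definition u_ring :: "('a, 'b) ring_scheme \<Rightarrow> bool" where
  "u_ring R \<longleftrightarrow> (\<forall>I. ideal I R \<longrightarrow> u_ideal R I)"

end

theory Submission
  imports Defs
begin

definition elemC :: "('a, 'b) ring_scheme \<Rightarrow> 'a set \<Rightarrow> (nat \<Rightarrow> 'a set) \<Rightarrow> nat set \<Rightarrow> bool" where
  "elemC R K J B \<longleftrightarrow> (\<forall>x. (\<forall>i\<in>B. x i \<in> J i) \<longrightarrow> finprod R x B \<in> K)"

context cring
begin

lemma colon_ideal:
  assumes K: "ideal K R" and P: "P \<subseteq> carrier R"
  shows "ideal {b \<in> carrier R. \<forall>p\<in>P. b \<otimes> p \<in> K} R"
proof (rule idealI)
  show "ring R" by (rule ring_axioms)
  show "subgroup {b \<in> carrier R. \<forall>p\<in>P. b \<otimes> p \<in> K} (add_monoid R)"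
  proof (rule add.subgroupI)
    show "{b \<in> carrier R. \<forall>p\<in>P. b \<otimes> p \<in> K} \<subseteq> carrier R" by auto
    have "\<zero> \<in> {b \<in> carrier R. \<forall>p\<in>P. b \<otimes> p \<in> K}"
      using P K by (auto simp: additive_subgroup.zero_closed ideal.axioms(1))
    then show "{b \<in> carrier R. \<forall>p\<in>P. b \<otimes> p \<in> K} \<noteq> {}" by blast
  next
    fix a assume a: "a \<in> {b \<in> carrier R. \<forall>p\<in>P. b \<otimes> p \<in> K}"
    show "\<ominus> a \<in> {b \<in> carrier R. \<forall>p\<in>P. b \<otimes> p \<in> K}"
      using a P K by (auto simp: l_minus subsetD additive_subgroup.a_inv_closed ideal.axioms(1))
  next
    fix a b assume a: "a \<in> {b \<in> carrier R. \<forall>p\<in>P. b \<otimes> p \<in> K}"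
      and b: "b \<in> {b \<in> carrier R. \<forall>p\<in>P. b \<otimes> p \<in> K}"
    show "a \<oplus> b \<in> {b \<in> carrier R. \<forall>p\<in>P. b \<otimes> p \<in> K}"
      using a b P K by (auto simp: l_distr subsetD additive_subgroup.a_closed ideal.axioms(1))
  qed
next
  fix a x assume a: "a \<in> {b \<in> carrier R. \<forall>p\<in>P. b \<otimes> p \<in> K}" and x: "x \<in> carrier R"
  show "x \<otimes> a \<in> {b \<in> carrier R. \<forall>p\<in>P. b \<otimes> p \<in> K}"
    using a x P K by (auto simp: m_assoc subsetD ideal.I_l_closed)
  then show "a \<otimes> x \<in> {b \<in> carrier R. \<forall>p\<in>P. b \<otimes> p \<in> K}"
    using a x by (simp add: m_comm)
qed

lemma setprod_insert:
  assumes "finite A" "\<forall>a\<in>A. b < a"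
  shows "ideal_setprod R J (insert b A) = ideal_prod R (J b) (ideal_setprod R J A)"
proof -
  have "Min (insert b A) = b" using assms by (auto intro!: Min_eqI simp: less_imp_le)
  moreover have "insert b A - {b} = A" using assms by auto
  ultimately show ?thesis using sorted_list_of_set_nonempty[of "insert b A"] assms
    by (simp add: ideal_setprod_def)
qed

lemma setprod_ideal:
  assumes "finite A" 
  shows "(\<forall>i\<in>A. ideal (J i) R) \<Longrightarrow> ideal (ideal_setprod R J A) R"
  using assms
proof (induction A rule: finite_linorder_min_induct)
  case empty
  then show ?case by (simp add: ideal_setprod_def oneideal)
next
  case (insert b A)
  then show ?case by (simp add: setprod_insert ideal_prod_is_ideal)
qed

lemma L:
  assumes "finite A"
  shows "(\<forall>i\<in>A. ideal (J i) R) \<Longrightarrow> ideal K R \<Longrightarrow> ideal_setprod R J A \<subseteq> K \<longleftrightarrow> elemC R K J A"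
  using assms
proof (induction A arbitrary: K rule: finite_linorder_min_induct)
  case empty
  show ?case
  proof
    assume "ideal_setprod R J {} \<subseteq> K"
    then show "elemC R K J {}" by (auto simp add: ideal_setprod_def elemC_def)
  next
    assume "elemC R K J {}"
    then have "\<one> \<in> K" by (simp add: elemC_def)
    then show "ideal_setprod R J {} \<subseteq> K"
      using empty(2) ideal.one_imp_carrier[of K R] by (simp add: ideal_setprod_def)
  qed
next
  case (insert b A)
  have Jc: "J i \<subseteq> carrier R" if "i \<in> insert b A" for i
  proof -
    have "ideal (J i) R" using insert(4) that by blast
    from ideal.Icarr[OF this] show ?thesis by blast
  qed
  have idA: "ideal (ideal_setprod R J A) R" using setprod_ideal[OF insert(1)] insert(4) by simp
  have bA: "b \<notin> A" using insert(2) by auto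
  show ?case
  proof
    assume sub: "ideal_setprod R J (insert b A) \<subseteq> K"
    show "elemC R K J (insert b A)" unfolding elemC_def
    proof (intro allI impI)
      fix x assume x: "\<forall>i\<in>insert b A. x i \<in> J i"
      have xc: "x \<in> A \<rightarrow> carrier R" "x b \<in> carrier R" using x Jc by auto
      have "elemC R (ideal_setprod R J A) J A"
        using insert(3)[OF _ idA] insert(4) by auto
      then have "finprod R x A \<in> ideal_setprod R J A" using x by (simp add: elemC_def)
      then have "x b \<otimes> finprod R x A \<in> ideal_setprod R J (insert b A)"
        unfolding setprod_insert[OF insert(1,2)] using x by (intro ideal_prod.prod) auto
      moreover have "finprod R x (insert b A) = x b \<otimes> finprod R x A"
        using xc insert(1) bA by (rule_tac finprod_insert) auto
      ultimately show "finprod R x (insert b A) \<in> K"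
        using sub by auto
    qed
  next
    assume C: "elemC R K J (insert b A)"
    show "ideal_setprod R J (insert b A) \<subseteq> K"
      unfolding setprod_insert[OF insert(1,2)]
    proof
      fix s assume "s \<in> ideal_prod R (J b) (ideal_setprod R J A)"
      then show "s \<in> K"
      proof (induction s rule: ideal_prod.induct)
        case (prod i j)
        have ic: "i \<in> carrier R" using prod Jc by auto
        have idK': "ideal {y \<in> carrier R. \<forall>p\<in>{i}. y \<otimes> p \<in> K} R"
          by (rule colon_ideal[OF insert(5)]) (use ic in blast)
        have "elemC R {y \<in> carrier R. \<forall>p\<in>{i}. y \<otimes> p \<in> K} J A"
          unfolding elemC_def
        proof (intro allI impI)
          fix x assume x: "\<forall>i\<in>A. x i \<in> J i"
          let ?x = "x(b := i)"
          have x': "\<forall>k\<in>insert b A. ?x k \<in> J k" using x prod bA by auto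
          have xc: "?x \<in> A \<rightarrow> carrier R" using x Jc bA by auto
          have eq: "finprod R ?x A = finprod R x A"
            using bA xc by (intro finprod_cong') auto
          have "finprod R ?x (insert b A) \<in> K" using C x' by (simp add: elemC_def)
          then have "i \<otimes> finprod R x A \<in> K" using xc ic insert(1) bA eq by simp
          moreover have "finprod R x A \<in> carrier R"
            using xc eq by (metis finprod_closed)
          ultimately show "finprod R x A \<in> {y \<in> carrier R. \<forall>p\<in>{i}. y \<otimes> p \<in> K}"
            using ic by (simp add: m_comm)
        qed
        then have "ideal_setprod R J A \<subseteq> {y \<in> carrier R. \<forall>p\<in>{i}. y \<otimes> p \<in> K}"
          using insert(3)[OF _ idK'] insert(4) by auto
        then have "j \<otimes> i \<in> K" using prod by auto
        moreover have "j \<in> carrier R" using ideal.Icarr[OF idA] prod by blast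
        ultimately show ?case using ic by (simp add: m_comm)
      next
        case (sum s1 s2)
        then show ?case using insert(5) by (simp add: additive_subgroup.a_closed ideal.axioms(1))
      qed
    qed
  qed
qed

lemma S:
  assumes nabs: "n_absorbing R n I" and ur: "u_ring R"
  shows "finite Ks \<Longrightarrow> Ks \<subseteq> {0..n} \<Longrightarrow> (\<forall>i\<in>Ks. ideal (J i) R) \<Longrightarrow>
    (\<forall>i\<in>{0..n}-Ks. \<exists>c\<in>carrier R. J i = {c}) \<Longrightarrow> elemC R I J {0..n} \<Longrightarrow>
    \<exists>j\<le>n. elemC R I J ({0..n}-{j})"
proof (induction Ks arbitrary: J rule: finite_induct)
  case (empty J)
  define c where "c i = (SOME c. c \<in> carrier R \<and> J i = {c})" for i
  have c: "c i \<in> carrier R \<and> J i = {c i}" if "i \<le> n" for i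
  proof -
    have "\<exists>c. c \<in> carrier R \<and> J i = {c}" using empty(3) that by (metis atLeastAtMost_iff zero_le Diff_empty)
    then show ?thesis unfolding c_def by (rule someI_ex)
  qed
  have "finprod R c {0..n} \<in> I"
    using empty(4) c unfolding elemC_def by auto
  then obtain j where j: "j \<le> n" "finprod R c ({0..n} - {j}) \<in> I"
    using nabs c unfolding n_absorbing_def by blast
  have "elemC R I J ({0..n}-{j})"
    unfolding elemC_def
  proof (intro allI impI)
    fix x assume x: "\<forall>i\<in>{0..n} - {j}. x i \<in> J i"
    have "finprod R x ({0..n} - {j}) = finprod R c ({0..n} - {j})"
      using x c by (intro finprod_cong') auto
    then show "finprod R x ({0..n} - {j}) \<in> I" using j by simp
  qed
  then show ?case using j by blast
next
  case (insert k Ks J)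
  let ?B = "\<lambda>j. {0..n} - {j}"
  have kn: "k \<le> n" using insert by auto
  have Jk: "ideal (J k) R" using insert by auto
  have Jc: "J i \<subseteq> carrier R" if "i \<le> n" for i
  proof (cases "i \<in> insert k Ks")
    case True
    then have "ideal (J i) R" using insert(5) by blast
    from ideal.Icarr[OF this] show ?thesis by blast
  next
    case False
    then have "i \<in> {0..n} - insert k Ks" using that by simp
    then obtain c where "c \<in> carrier R" "J i = {c}" using insert(6) by blast
    then show ?thesis by simp
  qed
  have Jc2: "y \<in> carrier R" if "i \<le> n" "y \<in> J i" for i y
    using Jc that by blast
  show ?case
  proof (cases "elemC R I J (?B k)")
    case True then show ?thesis using kn by blast
  next
    case notk: False
    define A where "A j = {a \<in> carrier R. elemC R I (J(k := {a})) (?B j)}" for j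
    have cover: "\<exists>j\<in>?B k. a \<in> A j" if a: "a \<in> J k" for a
    proof -
      have ac: "a \<in> carrier R" using a Jc2 kn by blast
      have h1: "\<forall>i\<in>Ks. ideal ((J(k := {a})) i) R" using insert by auto
      have h2: "\<forall>i\<in>{0..n}-Ks. \<exists>c\<in>carrier R. (J(k := {a})) i = {c}"
        using insert(6) ac by auto
      have h3: "elemC R I (J(k := {a})) {0..n}"
        using insert(7) a kn unfolding elemC_def
        by (metis atLeastAtMost_iff fun_upd_apply singletonD zero_le)
      obtain j where j: "j \<le> n" "elemC R I (J(k := {a})) (?B j)"
        using insert(3)[OF _ h1 h2 h3] insert(4) by blast
      have "j \<noteq> k"
      proof
        assume "j = k"
        then have "elemC R I J (?B k)" using j unfolding elemC_def by simp
        then show False using notk by simp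
      qed
      then show ?thesis using j ac unfolding A_def by auto
    qed
    have Aid: "ideal (A j) R" if j: "j \<in> ?B k" for j
    proof -
      let ?B' = "?B j - {k}"
      define P where "P = {finprod R x ?B' | x. \<forall>i\<in>?B'. x i \<in> J i}"
      have Pc: "P \<subseteq> carrier R"
      proof
        fix p assume "p \<in> P"
        then obtain x where x: "p = finprod R x ?B'" "\<forall>i\<in>?B'. x i \<in> J i"
          unfolding P_def by blast
        have "x \<in> ?B' \<rightarrow> carrier R" using x Jc2 by force
        then show "p \<in> carrier R" using x by simp
      qed
      have Bins: "?B j = insert k ?B'" using j kn by auto
      have "A j = {a \<in> carrier R. \<forall>p\<in>P. a \<otimes> p \<in> I}"
      proof (rule Set.set_eqI, rule iffI)
        fix a assume a: "a \<in> A j"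
        then have ac: "a \<in> carrier R" and C: "elemC R I (J(k := {a})) (?B j)"
          unfolding A_def by auto
        have "a \<otimes> p \<in> I" if "p \<in> P" for p
        proof -
          obtain x where x: "p = finprod R x ?B'" "\<forall>i\<in>?B'. x i \<in> J i"
            using \<open>p \<in> P\<close> unfolding P_def by blast
          let ?x = "x(k := a)"
          have xc: "?x \<in> ?B' \<rightarrow> carrier R" using x Jc2 by force
          have "finprod R ?x (?B j) \<in> I"
            using C x unfolding elemC_def by auto
          moreover have "finprod R ?x (?B j) = a \<otimes> finprod R ?x ?B'"
          proof -
            have "finprod R ?x (?B j) = finprod R ?x (insert k ?B')" by (rule arg_cong[OF Bins])
            also have "\<dots> = ?x k \<otimes> finprod R ?x ?B'" by (rule finprod_insert) (use xc ac in auto)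
            finally show ?thesis by simp
          qed
          moreover have "finprod R ?x ?B' = p"
            using x xc by (auto intro!: finprod_cong')
          ultimately show ?thesis by simp
        qed
        then show "a \<in> {a \<in> carrier R. \<forall>p\<in>P. a \<otimes> p \<in> I}" using ac by auto
      next
        fix a assume a: "a \<in> {a \<in> carrier R. \<forall>p\<in>P. a \<otimes> p \<in> I}"
        have "elemC R I (J(k := {a})) (?B j)"
          unfolding elemC_def
        proof (intro allI impI)
          fix x assume x: "\<forall>i\<in>?B j. x i \<in> (J(k := {a})) i"
          have kB: "k \<in> ?B j" using j kn by auto
          have xk: "x k = a" using x[rule_format, OF kB] by simp
          have x': "\<forall>i\<in>?B'. x i \<in> J i"
          proof
            fix i assume i: "i \<in> ?B'"
            then have "i \<in> ?B j" "i \<noteq> k" by auto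
            then show "x i \<in> J i" using x[rule_format, of i] by simp
          qed
          have xc: "x \<in> ?B' \<rightarrow> carrier R" using x' Jc2 by force
          have "finprod R x ?B' \<in> P" using x' unfolding P_def by blast
          then have "a \<otimes> finprod R x ?B' \<in> I" using a by auto
          moreover have "finprod R x (?B j) = x k \<otimes> finprod R x ?B'"
          proof -
            have "finprod R x (?B j) = finprod R x (insert k ?B')" by (rule arg_cong[OF Bins])
            also have "\<dots> = x k \<otimes> finprod R x ?B'" by (rule finprod_insert) (use xc xk a in auto)
            finally show ?thesis .
          qed
          ultimately show "finprod R x (?B j) \<in> I" using xk by simp
        qed
        then show "a \<in> A j" using a unfolding A_def by auto
      qed
      then show ?thesis using colon_ideal[OF _ Pc] nabs unfolding n_absorbing_def by simp
    qed
    have "u_ideal R (J k)" using ur Jk unfolding u_ring_def by blast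
    then have "\<forall>S. finite S \<longrightarrow> (\<forall>J\<in>S. ideal J R) \<longrightarrow> J k \<subseteq> \<Union>S \<longrightarrow> (\<exists>J'\<in>S. J k \<subseteq> J')"
      unfolding u_ideal_def by blast
    moreover have "finite (A ` ?B k)" by simp
    moreover have "\<forall>J\<in>A ` ?B k. ideal J R" using Aid by blast
    moreover have "J k \<subseteq> \<Union>(A ` ?B k)" using cover by blast
    ultimately obtain j where j: "j \<in> ?B k" "J k \<subseteq> A j" by blast
    have "elemC R I J (?B j)"
      unfolding elemC_def
    proof (intro allI impI)
      fix x assume x: "\<forall>i\<in>?B j. x i \<in> J i"
      have "x k \<in> A j" using x j kn by auto
      then have "elemC R I (J(k := {x k})) (?B j)" unfolding A_def by auto
      then show "finprod R x (?B j) \<in> I" using x unfolding elemC_def by auto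
    qed
    then show ?thesis using j by auto
  qed
qed

end

theorem theorem2:
  fixes R :: "('a, 'b) ring_scheme" and n :: nat and I :: "'a set"
  assumes "cring R" and "\<one>\<^bsub>R\<^esub> \<noteq> \<zero>\<^bsub>R\<^esub>"
    and "u_ring R" and "n \<ge> 1"
    and "n_absorbing R n I"
  shows "strongly_n_absorbing R n I"
proof -
  interpret cring R by fact
  have idI: "ideal I R" using assms(5) unfolding n_absorbing_def by blast
  show ?thesis
    unfolding strongly_n_absorbing_def
  proof (intro conjI allI impI idI)
    fix J assume J: "\<forall>i\<le>n. ideal (J i) R" and sub: "ideal_setprod R J {0..n} \<subseteq> I"
    have "elemC R I J {0..n}" using L[of "{0..n}" J I] J sub idI by auto
    then obtain j where j: "j \<le> n" "elemC R I J ({0..n} - {j})"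
      using S[OF assms(5) assms(3), of "{0..n}" J] J by auto
    then have "ideal_setprod R J ({0..n} - {j}) \<subseteq> I"
      using L[of "{0..n} - {j}" J I] J idI by auto
    then show "\<exists>j\<le>n. ideal_setprod R J ({0..n} - {j}) \<subseteq> I" using j by blast
  qed
qed

end
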